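(* Let $G$ be a finite group, $K\unlhd H\le G$ with $H/K$ cyclic, $A\unlhd H$, and $D=K\cap A$. Then $\varepsilon(A,D)=\varepsilon(H,K)+e$ for some central idempotent $e$ of $\mathbb{Q}H$ orthogonal to $\varepsilon(H,K)$.
   Context: For $K\unlhd H$: $\widehat{H}=\frac1{|H|}\sum_{h\in H}h$; $\varepsilon(H,K)=\widehat K$ if $H=K$, and otherwise $\varepsilon(H,K)=\prod(\widehat K-\widehat L)$, the product over all $L\unlhd H$ with $K\subsetneq L$ and $L/K$ a minimal normal subgroup of $H/K$. *)

theory Defs
  imports "HOL-Algebra.Algebra"
begin

text \<open>Rational group algebra of a finite group G, elements represented as functions
  carrier G \<rightarrow> rat (zero outside carrier G).  The group algebra QH of a subgroup H
  is the subalgebra of functions supported on H.\<close>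

definition ga_mult :: "('a, 'b) monoid_scheme \<Rightarrow> ('a \<Rightarrow> rat) \<Rightarrow> ('a \<Rightarrow> rat) \<Rightarrow> ('a \<Rightarrow> rat)" where
  "ga_mult G x y = (\<lambda>g. if g \<in> carrier G
      then (\<Sum>h\<in>carrier G. x h * y (inv\<^bsub>G\<^esub> h \<otimes>\<^bsub>G\<^esub> g)) else 0)"

definition ga_sub :: "('a \<Rightarrow> rat) \<Rightarrow> ('a \<Rightarrow> rat) \<Rightarrow> ('a \<Rightarrow> rat)" where
  "ga_sub x y = (\<lambda>g. x g - y g)"

definition ga_add :: "('a \<Rightarrow> rat) \<Rightarrow> ('a \<Rightarrow> rat) \<Rightarrow> ('a \<Rightarrow> rat)" where
  "ga_add x y = (\<lambda>g. x g + y g)"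

definition in_ga :: "'a set \<Rightarrow> ('a \<Rightarrow> rat) \<Rightarrow> bool" where
  "in_ga H x \<longleftrightarrow> (\<forall>g. g \<notin> H \<longrightarrow> x g = 0)"

definition hat :: "'a set \<Rightarrow> ('a \<Rightarrow> rat)" where
  "hat K = (\<lambda>g. if g \<in> K then 1 / of_nat (card K) else 0)"

text \<open>Product (in the group algebra of G) of the elements f L, L ranging over a finite
  set S, taken in some enumeration order (all uses below have commuting factors);
  empty product is the identity element.\<close>
definition ga_prod :: "('a, 'b) monoid_scheme \<Rightarrow> 'c set \<Rightarrow> ('c \<Rightarrow> ('a \<Rightarrow> rat)) \<Rightarrow> ('a \<Rightarrow> rat)" where
  "ga_prod G S f = foldr (\<lambda>L acc. ga_mult G (f L) acc)
      (SOME xs. distinct xs \<and> set xs = S) (hat {\<one>\<^bsub>G\<^esub>})"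

definition minimal_normal :: "('c, 'd) monoid_scheme \<Rightarrow> 'c set \<Rightarrow> bool" where
  "minimal_normal Q N \<longleftrightarrow> N \<lhd> Q \<and> N \<noteq> {\<one>\<^bsub>Q\<^esub>} \<and>
     (\<forall>M. M \<lhd> Q \<longrightarrow> M \<subseteq> N \<longrightarrow> M = {\<one>\<^bsub>Q\<^esub>} \<or> M = N)"

text \<open>Here H is viewed as the group \<open>G\<lparr>carrier := H\<rparr>\<close> and
  \<open>L/K = {K l | l \<in> L}\<close> as a subgroup of \<open>H Mod K\<close>.\<close>
definition min_normal_over :: "('a, 'b) monoid_scheme \<Rightarrow> 'a set \<Rightarrow> 'a set \<Rightarrow> 'a set set" where
  "min_normal_over G H K = {L. L \<lhd> G\<lparr>carrier := H\<rparr> \<and> K \<subset> L \<and>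
      minimal_normal (G\<lparr>carrier := H\<rparr> Mod K) ((\<lambda>l. K #>\<^bsub>G\<^esub> l) ` L)}"

definition eps :: "('a, 'b) monoid_scheme \<Rightarrow> 'a set \<Rightarrow> 'a set \<Rightarrow> ('a \<Rightarrow> rat)" where
  "eps G H K = (if H = K then hat K
     else ga_prod G (min_normal_over G H K) (\<lambda>L. ga_sub (hat K) (hat L)))"

end

theory Submission
  imports Defs
begin


context group begin

lemma cancel1: "x \<in> carrier G \<Longrightarrow> y \<in> carrier G \<Longrightarrow> inv x \<otimes> (x \<otimes> y) = y"
  by (simp add: m_assoc[symmetric])
lemma cancel2: "x \<in> carrier G \<Longrightarrow> y \<in> carrier G \<Longrightarrow> x \<otimes> (inv x \<otimes> y) = y"
  by (simp add: m_assoc[symmetric])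

lemma rcos_eq_iff:
  assumes K: "subgroup K G" and x: "x \<in> carrier G" and y: "y \<in> carrier G"
  shows "(K #> x = K #> y) = (x \<otimes> inv y \<in> K)"
proof
  assume "K #> x = K #> y"
  then have "x \<in> K #> y" using rcos_self[OF x K] by simp
  then show "x \<otimes> inv y \<in> K" by (rule subgroup.rcos_module_imp[OF K is_group y])
next
  assume "x \<otimes> inv y \<in> K"
  then have "x \<in> K #> y" by (rule subgroup.rcos_module_rev[OF K is_group y x])
  then show "K #> x = K #> y" by (rule repr_independence[OF _ y K, symmetric])
qed

lemma rcos_eq_K:
  assumes K: "subgroup K G" and x: "x \<in> carrier G"
  shows "(K #> x = K) = (x \<in> K)"
proof
  assume "K #> x = K"
  then show "x \<in> K" using rcos_self[OF x K] by simp
next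
  assume "x \<in> K"
  then show "K #> x = K" by (rule coset_join2[OF x K])
qed

lemma quot_hom:
  assumes "K \<lhd> G"
  shows "group_hom G (G Mod K) (\<lambda>a. K #> a)"
  unfolding group_hom_def group_hom_axioms_def
  using is_group normal.factorgroup_is_group[OF assms] normal.r_coset_hom_Mod[OF assms] by blast

lemma quot_surj:
  "(\<lambda>a. K #> a) ` carrier G = carrier (G Mod K)"
  by (simp add: carrier_FactGroup)

lemma image_normal:
  assumes K: "K \<lhd> G" and L: "L \<lhd> G"
  shows "(\<lambda>l. K #> l) ` L \<lhd> G Mod K"
  by (rule normal.surj_hom_normal_subgroup[OF L quot_hom[OF K] quot_surj])

lemma vimage_normal:
  assumes h: "group_hom G F \<phi>" and N: "N \<lhd> F"
  shows "{x \<in> carrier G. \<phi> x \<in> N} \<lhd> G"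
proof -
  interpret gh: group_hom G F \<phi> by (rule h)
  have NF: "subgroup N F" by (rule normal_imp_subgroup[OF N])
  show ?thesis
  proof (rule normal_invI)
    show "subgroup {x \<in> carrier G. \<phi> x \<in> N} G"
    proof (rule subgroupI)
      show "{x \<in> carrier G. \<phi> x \<in> N} \<subseteq> carrier G" by blast
      show "{x \<in> carrier G. \<phi> x \<in> N} \<noteq> {}"
      proof -
        have "\<one> \<in> {x \<in> carrier G. \<phi> x \<in> N}" using subgroup.one_closed[OF NF] by simp
        then show ?thesis by blast
      qed
    next
      fix a assume "a \<in> {x \<in> carrier G. \<phi> x \<in> N}"
      then have a: "a \<in> carrier G" "\<phi> a \<in> N" by auto
      have "\<phi> (inv a) = inv\<^bsub>F\<^esub> (\<phi> a)" by (rule gh.hom_inv[OF a(1)])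
      then show "inv a \<in> {x \<in> carrier G. \<phi> x \<in> N}"
        using subgroup.m_inv_closed[OF NF a(2)] a(1) by simp
    next
      fix a b assume "a \<in> {x \<in> carrier G. \<phi> x \<in> N}" "b \<in> {x \<in> carrier G. \<phi> x \<in> N}"
      then have a: "a \<in> carrier G" "\<phi> a \<in> N" and b: "b \<in> carrier G" "\<phi> b \<in> N" by auto
      have "\<phi> (a \<otimes> b) = \<phi> a \<otimes>\<^bsub>F\<^esub> \<phi> b" by (rule gh.hom_mult[OF a(1) b(1)])
      then show "a \<otimes> b \<in> {x \<in> carrier G. \<phi> x \<in> N}"
        using subgroup.m_closed[OF NF a(2) b(2)] a(1) b(1) by simp
    qed
  next
    fix x h assume x: "x \<in> carrier G" and h: "h \<in> {x \<in> carrier G. \<phi> x \<in> N}"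
    then have hc: "h \<in> carrier G" "\<phi> h \<in> N" by auto
    have "\<phi> (x \<otimes> h \<otimes> inv x) = \<phi> x \<otimes>\<^bsub>F\<^esub> \<phi> h \<otimes>\<^bsub>F\<^esub> inv\<^bsub>F\<^esub> (\<phi> x)"
      using x hc by (simp add: gh.hom_mult gh.hom_inv)
    moreover have "\<phi> x \<otimes>\<^bsub>F\<^esub> \<phi> h \<otimes>\<^bsub>F\<^esub> inv\<^bsub>F\<^esub> (\<phi> x) \<in> N"
      using normal.inv_op_closed2[OF N] x hc(2) by simp
    ultimately show "x \<otimes> h \<otimes> inv x \<in> {x \<in> carrier G. \<phi> x \<in> N}" using x hc by simp
  qed
qed

lemma min_normal_from_crit:
  assumes K: "K \<lhd> G" and L: "L \<lhd> G" and KL: "K \<subseteq> L" and l0: "l0 \<in> L" "l0 \<notin> K"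
    and crit: "\<And>N. N \<lhd> G \<Longrightarrow> K \<subseteq> N \<Longrightarrow> N \<subseteq> L \<Longrightarrow> N = K \<or> N = L"
  shows "minimal_normal (G Mod K) ((\<lambda>l. K #> l) ` L)"
  unfolding minimal_normal_def
proof (intro conjI allI impI)
  have sK: "subgroup K G" by (rule normal_imp_subgroup[OF K])
  have sL: "subgroup L G" by (rule normal_imp_subgroup[OF L])
  have LC: "L \<subseteq> carrier G" by (rule subgroup.subset[OF sL])
  have KC: "K \<subseteq> carrier G" by (rule subgroup.subset[OF sK])
  show "(\<lambda>l. K #> l) ` L \<lhd> G Mod K" by (rule image_normal[OF K L])
  have "K #> l0 \<noteq> K" using rcos_eq_K[OF sK] l0 LC by blast
  then show "(\<lambda>l. K #> l) ` L \<noteq> {\<one>\<^bsub>G Mod K\<^esub>}" using l0(1) by auto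
  fix M assume M: "M \<lhd> G Mod K" and Msub: "M \<subseteq> (\<lambda>l. K #> l) ` L"
  define N where "N = {x \<in> carrier G. K #> x \<in> M}"
  have N: "N \<lhd> G" unfolding N_def by (rule vimage_normal[OF quot_hom[OF K] M])
  have sM: "subgroup M (G Mod K)" by (rule normal_imp_subgroup[OF M])
  have oneM: "K \<in> M" using subgroup.one_closed[OF sM] by simp
  have KN: "K \<subseteq> N"
  proof
    fix k assume k: "k \<in> K"
    then have "k \<in> carrier G" using KC by blast
    moreover then have "K #> k = K" using rcos_eq_K[OF sK] k by blast
    ultimately show "k \<in> N" using oneM by (simp add: N_def)
  qed
  have NL: "N \<subseteq> L"
  proof
    fix x assume "x \<in> N"
    then have x: "x \<in> carrier G" "K #> x \<in> M" by (auto simp: N_def)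
    then obtain l where l: "l \<in> L" "K #> x = K #> l" using Msub by blast
    have lC: "l \<in> carrier G" using l LC by blast
    have "x \<otimes> inv l \<in> K" using rcos_eq_iff[OF sK x(1) lC] l by simp
    then have "x \<otimes> inv l \<in> L" using KL by blast
    then have "(x \<otimes> inv l) \<otimes> l \<in> L" using l(1) by (rule subgroup.m_closed[OF sL])
    then show "x \<in> L" using x(1) lC by (simp add: m_assoc)
  qed
  have MN: "M = (\<lambda>x. K #> x) ` N"
  proof
    show "M \<subseteq> (\<lambda>x. K #> x) ` N"
    proof
      fix m assume m: "m \<in> M"
      have "m \<in> carrier (G Mod K)" using m subgroup.subset[OF sM] by blast
      then obtain x where "x \<in> carrier G" "m = K #> x" using quot_surj by blast
      then show "m \<in> (\<lambda>x. K #> x) ` N" using m by (auto simp: N_def)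
    qed
    show "(\<lambda>x. K #> x) ` N \<subseteq> M" by (auto simp: N_def)
  qed
  from crit[OF N KN NL] show "M = {\<one>\<^bsub>G Mod K\<^esub>} \<or> M = (\<lambda>l. K #> l) ` L"
  proof
    assume "N = K"
    then have "M = (\<lambda>x. K #> x) ` K" using MN by simp
    also have "\<dots> = {K}"
    proof
      show "(\<lambda>x. K #> x) ` K \<subseteq> {K}" using rcos_eq_K[OF sK] KC by blast
      show "{K} \<subseteq> (\<lambda>x. K #> x) ` K" using rcos_eq_K[OF sK] KC subgroup.one_closed[OF sK]
        by (metis empty_subsetI image_eqI insert_subset one_closed)
    qed
    finally show ?thesis by simp
  next
    assume "N = L" then show ?thesis using MN by simp
  qed
qed

lemma min_normal_crit:
  assumes K: "K \<lhd> G" and L: "L \<lhd> G" and KL: "K \<subseteq> L"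
    and mn: "minimal_normal (G Mod K) ((\<lambda>l. K #> l) ` L)"
    and N: "N \<lhd> G" and KN: "K \<subseteq> N" and NL: "N \<subseteq> L"
  shows "N = K \<or> N = L"
proof -
  have sK: "subgroup K G" by (rule normal_imp_subgroup[OF K])
  have sN: "subgroup N G" by (rule normal_imp_subgroup[OF N])
  have NC: "N \<subseteq> carrier G" by (rule subgroup.subset[OF sN])
  have "(\<lambda>l. K #> l) ` N \<lhd> G Mod K" by (rule image_normal[OF K N])
  moreover have "(\<lambda>l. K #> l) ` N \<subseteq> (\<lambda>l. K #> l) ` L" using NL by blast
  ultimately have "(\<lambda>l. K #> l) ` N = {K} \<or> (\<lambda>l. K #> l) ` N = (\<lambda>l. K #> l) ` L"
    using mn unfolding minimal_normal_def by simp
  then show ?thesis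
  proof
    assume a: "(\<lambda>l. K #> l) ` N = {K}"
    have "N \<subseteq> K"
    proof
      fix n assume n: "n \<in> N"
      then have "K #> n = K" using a by blast
      then show "n \<in> K" using rcos_eq_K[OF sK] n NC by blast
    qed
    then show ?thesis using KN by blast
  next
    assume a: "(\<lambda>l. K #> l) ` N = (\<lambda>l. K #> l) ` L"
    have "L \<subseteq> N"
    proof
      fix l assume l: "l \<in> L"
      then obtain n where n: "n \<in> N" "K #> l = K #> n" using a by (metis imageE imageI)
      have lC: "l \<in> carrier G" using l NL assms(2) normal_imp_subgroup subgroup.subset by blast
      have nC: "n \<in> carrier G" using n NC by blast
      have "l \<otimes> inv n \<in> K" using rcos_eq_iff[OF sK lC nC] n by simp
      then have "l \<otimes> inv n \<in> N" using KN by blast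
      then have "(l \<otimes> inv n) \<otimes> n \<in> N" using n(1) by (rule subgroup.m_closed[OF sN])
      then show "l \<in> N" using lC nC by (simp add: m_assoc)
    qed
    then show ?thesis using NL by blast
  qed
qed

lemma exists_min_normal:
  assumes fin: "finite (carrier G)" and K: "K \<lhd> G" and ne: "K \<noteq> carrier G"
  shows "\<exists>L. L \<lhd> G \<and> K \<subset> L \<and> minimal_normal (G Mod K) ((\<lambda>l. K #> l) ` L)"
proof -
  define P where "P n = (\<exists>L. L \<lhd> G \<and> K \<subset> L \<and> card L = n)" for n
  have sK: "subgroup K G" by (rule normal_imp_subgroup[OF K])
  have KC: "K \<subseteq> carrier G" by (rule subgroup.subset[OF sK])
  have "carrier G \<lhd> G" by (rule normal_invI) (auto intro: subgroup_self)
  then have "P (card (carrier G))" unfolding P_def using KC ne by blast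
  then obtain n where Pn: "P n" and minn: "\<And>m. m < n \<Longrightarrow> \<not> P m"
    using exists_least_iff[of P] by blast
  then obtain L where L: "L \<lhd> G" "K \<subset> L" "card L = n" unfolding P_def by blast
  have LC: "L \<subseteq> carrier G" by (rule subgroup.subset[OF normal_imp_subgroup[OF L(1)]])
  obtain l0 where l0: "l0 \<in> L" "l0 \<notin> K" using L(2) by blast
  have "minimal_normal (G Mod K) ((\<lambda>l. K #> l) ` L)"
  proof (rule min_normal_from_crit[OF K L(1) _ l0])
    show "K \<subseteq> L" using L(2) by blast
    fix N assume N: "N \<lhd> G" "K \<subseteq> N" "N \<subseteq> L"
    show "N = K \<or> N = L"
    proof (rule ccontr)
      assume c: "\<not> (N = K \<or> N = L)"
      then have "N \<subset> L" "K \<subset> N" using N by auto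
      moreover have "finite L" using LC fin finite_subset by blast
      ultimately have "card N < n" using L(3) psubset_card_mono by blast
      then have "\<not> P (card N)" by (rule minn)
      then show False using N(1) \<open>K \<subset> N\<close> unfolding P_def by blast
    qed
  qed
  then show ?thesis using L by blast
qed

lemma abelian_normal:
  assumes K: "K \<lhd> G" and ab: "comm_group (G Mod K)" and N: "subgroup N G" and KN: "K \<subseteq> N"
  shows "N \<lhd> G"
proof (rule normal_invI[OF N])
  fix x h assume x: "x \<in> carrier G" and h: "h \<in> N"
  have sK: "subgroup K G" by (rule normal_imp_subgroup[OF K])
  have hC: "h \<in> carrier G" using h subgroup.subset[OF N] by blast
  have "(K #> x) <#> (K #> h) = (K #> h) <#> (K #> x)"
  proof -
    have a: "K #> x \<in> carrier (G Mod K)" "K #> h \<in> carrier (G Mod K)"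
      using x hC quot_surj by blast+
    show ?thesis using comm_monoid.m_comm[OF comm_group.axioms(1)[OF ab] a] by simp
  qed
  then have "K #> (x \<otimes> h) = K #> (h \<otimes> x)" using normal.rcos_sum[OF K] x hC by simp
  then have "(x \<otimes> h) \<otimes> inv (h \<otimes> x) \<in> K" using rcos_eq_iff[OF sK] x hC by simp
  moreover have "(x \<otimes> h) \<otimes> inv (h \<otimes> x) = (x \<otimes> h \<otimes> inv x) \<otimes> inv h"
    using x hC by (simp add: inv_mult_group m_assoc)
  ultimately have "(x \<otimes> h \<otimes> inv x) \<otimes> inv h \<in> N" using KN by auto
  then have "((x \<otimes> h \<otimes> inv x) \<otimes> inv h) \<otimes> h \<in> N" using h by (rule subgroup.m_closed[OF N])
  then show "x \<otimes> h \<otimes> inv x \<in> N" using x hC by (simp add: m_assoc)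
qed

lemma G4:
  assumes K: "K \<lhd> G" and A: "A \<lhd> G" and ab: "comm_group (G Mod K)"
    and M: "M \<lhd> G\<lparr>carrier := A\<rparr>" and DM: "K \<inter> A \<subset> M"
    and mn: "minimal_normal (G\<lparr>carrier := A\<rparr> Mod (K \<inter> A)) ((\<lambda>l. (K \<inter> A) #> l) ` M)"
  shows "K <#> M \<lhd> G \<and> K \<subset> K <#> M \<and> minimal_normal (G Mod K) ((\<lambda>l. K #> l) ` (K <#> M))
         \<and> M \<subseteq> K <#> M \<and> M \<lhd> G"
proof -
  have sK: "subgroup K G" by (rule normal_imp_subgroup[OF K])
  have sA: "subgroup A G" by (rule normal_imp_subgroup[OF A])
  have AG: "group (G\<lparr>carrier := A\<rparr>)" by (rule subgroup.subgroup_is_group[OF sA is_group])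
  have sMA: "subgroup M (G\<lparr>carrier := A\<rparr>)" by (rule normal_imp_subgroup[OF M])
  have sM: "subgroup M G" by (rule incl_subgroup[OF sA sMA])
  have MA: "M \<subseteq> A" using subgroup.subset[OF sMA] by simp
  have KC: "K \<subseteq> carrier G" by (rule subgroup.subset[OF sK])
  have AC: "A \<subseteq> carrier G" by (rule subgroup.subset[OF sA])
  have D: "K \<inter> A \<lhd> G\<lparr>carrier := A\<rparr>" by (rule normal_Int_subgroup[OF sA K])
  define L where "L = K <#> M"
  have sL: "subgroup L G"
  proof -
    have "second_isomorphism_grp K G M"
      unfolding second_isomorphism_grp_def second_isomorphism_grp_axioms_def using K sM by simp
    then show ?thesis unfolding L_def by (rule second_isomorphism_grp.normal_set_mult_subgroup)
  qed
  have memL: "x \<in> L \<longleftrightarrow> (\<exists>k\<in>K. \<exists>m\<in>M. x = k \<otimes> m)" for x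
    unfolding L_def set_mult_def by blast
  have KL: "K \<subseteq> L"
  proof
    fix k assume k: "k \<in> K"
    then have "k = k \<otimes> \<one>" using KC by auto
    then show "k \<in> L" using k subgroup.one_closed[OF sM] memL[of k] by blast
  qed
  have MsubL: "M \<subseteq> L"
  proof
    fix m assume m: "m \<in> M"
    then have "m = \<one> \<otimes> m" using MA AC by auto
    then show "m \<in> L" using m subgroup.one_closed[OF sK] memL[of m] by blast
  qed
  obtain m0 where m0: "m0 \<in> M" "m0 \<notin> K \<inter> A" using DM by blast
  have m0K: "m0 \<notin> K" using m0 MA by blast
  have Ln: "L \<lhd> G" by (rule abelian_normal[OF K ab sL KL])
  have decomp: "\<exists>k\<in>K. \<exists>m\<in>M. x = k \<otimes> m \<and> k = x \<otimes> inv m \<and> m = inv k \<otimes> x" if xL: "x \<in> L" for x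
  proof -
    obtain k m where km: "k \<in> K" "m \<in> M" "x = k \<otimes> m" using xL memL[of x] by blast
    have kC: "k \<in> carrier G" and mC: "m \<in> carrier G" using km KC MA AC by auto
    have "k = x \<otimes> inv m" "m = inv k \<otimes> x" using km(3) kC mC by (simp_all add: m_assoc cancel1)
    then show ?thesis using km by blast
  qed
  have LA: "L \<inter> A \<subseteq> M"
  proof
    fix x assume x: "x \<in> L \<inter> A"
    obtain k m where km: "k \<in> K" "m \<in> M" "x = k \<otimes> m" "k = x \<otimes> inv m" using decomp x by blast
    have mA: "m \<in> A" using km(2) MA by blast
    have xA: "x \<in> A" using x by blast
    have "x \<otimes> inv m \<in> A" by (rule subgroup.m_closed[OF sA xA subgroup.m_inv_closed[OF sA mA]])
    then have "k \<in> A" using km(4) by simp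
    then have "k \<in> M" using km(1) DM by blast
    then have "k \<otimes> m \<in> M" using km(2) by (rule subgroup.m_closed[OF sM])
    then show "x \<in> M" using km(3) by simp
  qed
  have Mn: "M \<lhd> G"
  proof -
    have "L \<inter> A = M" using LA MsubL MA by blast
    then show ?thesis using normal_subgroup_intersect[OF Ln A] by simp
  qed
  have mnL: "minimal_normal (G Mod K) ((\<lambda>l. K #> l) ` L)"
  proof (rule min_normal_from_crit[OF K Ln KL])
    show "m0 \<in> L" "m0 \<notin> K" using m0(1) MsubL m0K by auto
    fix N assume N: "N \<lhd> G" and KN: "K \<subseteq> N" and NL: "N \<subseteq> L"
    have sN: "subgroup N G" by (rule normal_imp_subgroup[OF N])
    have NA: "N \<inter> A \<lhd> G\<lparr>carrier := A\<rparr>" by (rule normal_Int_subgroup[OF sA N])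
    have "N \<inter> A = K \<inter> A \<or> N \<inter> A = M"
    proof (rule group.min_normal_crit[OF AG D M])
      show "K \<inter> A \<subseteq> M" using DM by blast
      show "minimal_normal (G\<lparr>carrier := A\<rparr> Mod (K \<inter> A)) ((\<lambda>l. (K \<inter> A) #>\<^bsub>G\<lparr>carrier := A\<rparr>\<^esub> l) ` M)"
        using mn by simp
      show "N \<inter> A \<lhd> G\<lparr>carrier := A\<rparr>" by (rule NA)
      show "K \<inter> A \<subseteq> N \<inter> A" using KN by blast
      show "N \<inter> A \<subseteq> M" using NL LA by blast
    qed
    then show "N = K \<or> N = L"
    proof
      assume NAD: "N \<inter> A = K \<inter> A"
      have "N \<subseteq> K"
      proof
        fix x assume x: "x \<in> N"
        obtain k m where km: "k \<in> K" "m \<in> M" "x = k \<otimes> m" "m = inv k \<otimes> x"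
          using decomp x NL by blast
        have kN: "k \<in> N" using km(1) KN by blast
        have "inv k \<otimes> x \<in> N" by (rule subgroup.m_closed[OF sN subgroup.m_inv_closed[OF sN kN] x])
        then have "m \<in> N" using km(4) by simp
        then have "m \<in> N \<inter> A" using km(2) MA by blast
        then have "m \<in> K" using NAD by blast
        then have "k \<otimes> m \<in> K" using km(1) subgroup.m_closed[OF sK] by simp
        then show "x \<in> K" using km(3) by simp
      qed
      then show ?thesis using KN by blast
    next
      assume "N \<inter> A = M"
      then have MN: "M \<subseteq> N" by blast
      have "L \<subseteq> N"
      proof
        fix x assume "x \<in> L"
        then obtain k m where km: "k \<in> K" "m \<in> M" "x = k \<otimes> m" using memL[of x] by blast
        have "k \<in> N" "m \<in> N" using km KN MN by auto
        then have "k \<otimes> m \<in> N" by (rule subgroup.m_closed[OF sN])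
        then show "x \<in> N" using km(3) by simp
      qed
      then show ?thesis using NL by blast
    qed
  qed
  have "K \<subset> L" using KL m0(1) MsubL m0K by blast
  then show ?thesis using Ln mnL MsubL Mn unfolding L_def by blast
qed

end



locale fgroup = group + assumes fin: "finite (carrier G)"

context group begin

lemma sum_transl:
  assumes "a \<in> carrier G"
  shows "(\<Sum>g\<in>carrier G. f (a \<otimes> g)) = (\<Sum>g\<in>carrier G. f g)"
proof -
  have "bij_betw (\<lambda>g. a \<otimes> g) (carrier G) (carrier G)"
    by (rule bij_betwI[where g="\<lambda>g. inv a \<otimes> g"])
       (auto simp: assms m_assoc[symmetric])
  then show ?thesis by (rule sum.reindex_bij_betw)
qed

lemma ga_assoc: "ga_mult G (ga_mult G x y) z = ga_mult G x (ga_mult G y z)"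
proof (rule ext)
  fix g
  show "ga_mult G (ga_mult G x y) z g = ga_mult G x (ga_mult G y z) g"
  proof (cases "g \<in> carrier G")
    case True
    have "ga_mult G (ga_mult G x y) z g
        = (\<Sum>h\<in>carrier G. (\<Sum>k\<in>carrier G. x k * y (inv k \<otimes> h)) * z (inv h \<otimes> g))"
      using True by (simp add: ga_mult_def)
    also have "\<dots> = (\<Sum>k\<in>carrier G. \<Sum>h\<in>carrier G. x k * (y (inv k \<otimes> h) * z (inv h \<otimes> g)))"
      unfolding sum_distrib_right by (subst sum.swap) (simp add: mult.assoc)
    also have "\<dots> = (\<Sum>k\<in>carrier G. x k * (\<Sum>h\<in>carrier G. y (inv k \<otimes> h) * z (inv h \<otimes> g)))"
      by (simp add: sum_distrib_left)
    also have "\<dots> = (\<Sum>k\<in>carrier G. x k * (\<Sum>h\<in>carrier G. y h * z (inv h \<otimes> (inv k \<otimes> g))))"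
    proof (rule sum.cong[OF refl])
      fix k assume k: "k \<in> carrier G"
      have "(\<Sum>h\<in>carrier G. y (inv k \<otimes> h) * z (inv h \<otimes> g))
          = (\<Sum>h\<in>carrier G. y (inv k \<otimes> (k \<otimes> h)) * z (inv (k \<otimes> h) \<otimes> g))"
        using sum_transl[OF k, of "\<lambda>h. y (inv k \<otimes> h) * z (inv h \<otimes> g)"] by simp
      also have "\<dots> = (\<Sum>h\<in>carrier G. y h * z (inv h \<otimes> (inv k \<otimes> g)))"
        by (rule sum.cong[OF refl]) (simp add: k True inv_mult_group m_assoc[symmetric])
      finally show "x k * (\<Sum>h\<in>carrier G. y (inv k \<otimes> h) * z (inv h \<otimes> g))
          = x k * (\<Sum>h\<in>carrier G. y h * z (inv h \<otimes> (inv k \<otimes> g)))" by simp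
    qed
    also have "\<dots> = ga_mult G x (ga_mult G y z) g"
      using True by (simp add: ga_mult_def)
    finally show ?thesis .
  next
    case False then show ?thesis by (simp add: ga_mult_def)
  qed
qed


lemma ga_mult_sub_right: "ga_mult G x (ga_sub y z) = ga_sub (ga_mult G x y) (ga_mult G x z)"
  by (rule ext) (simp add: ga_mult_def ga_sub_def algebra_simps sum_subtractf)

lemma ga_mult_sub_left: "ga_mult G (ga_sub y z) x = ga_sub (ga_mult G y x) (ga_mult G z x)"
  by (rule ext) (simp add: ga_mult_def ga_sub_def algebra_simps sum_subtractf)

lemma ga_mult_zero_right: "ga_mult G x (\<lambda>_. 0) = (\<lambda>_. 0)"
  by (rule ext) (simp add: ga_mult_def)

lemma ga_mult_zero_left: "ga_mult G (\<lambda>_. 0) x = (\<lambda>_. 0)"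
  by (rule ext) (simp add: ga_mult_def)

lemma ga_sub_self: "ga_sub x x = (\<lambda>_. 0)"
  by (simp add: ga_sub_def)

lemma in_ga_sub: "in_ga S x \<Longrightarrow> in_ga S y \<Longrightarrow> in_ga S (ga_sub x y)"
  by (simp add: in_ga_def ga_sub_def)

lemma in_ga_mult_carrier: "in_ga (carrier G) (ga_mult G x y)"
  by (simp add: in_ga_def ga_mult_def)

lemma in_ga_mult:
  assumes "subgroup S G" "in_ga S x" "in_ga S y"
  shows "in_ga S (ga_mult G x y)"
  unfolding in_ga_def
proof (intro allI impI)
  fix g assume g: "g \<notin> S"
  show "ga_mult G x y g = 0"
  proof (cases "g \<in> carrier G")
    case True
    have "x h * y (inv h \<otimes> g) = 0" if h: "h \<in> carrier G" for h
    proof (cases "h \<in> S")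
      case True
      have "inv h \<otimes> g \<notin> S"
      proof
        assume "inv h \<otimes> g \<in> S"
        with True have "h \<otimes> (inv h \<otimes> g) \<in> S" by (rule subgroup.m_closed[OF assms(1)])
        then show False using g h \<open>g \<in> carrier G\<close> by (simp add: m_assoc[symmetric])
      qed
      then show ?thesis using assms(3) by (simp add: in_ga_def)
    next
      case False then show ?thesis using assms(2) by (simp add: in_ga_def)
    qed
    then show ?thesis by (simp add: ga_mult_def sum.neutral)
  next
    case False then show ?thesis by (simp add: ga_mult_def)
  qed
qed

lemma hat_in_ga: "N \<subseteq> S \<Longrightarrow> in_ga S (hat N)"
  by (auto simp: in_ga_def hat_def)

end

context fgroup begin

lemma hat_one_left:
  assumes "in_ga (carrier G) x"
  shows "ga_mult G (hat {\<one>}) x = x"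
proof (rule ext)
  fix g show "ga_mult G (hat {\<one>}) x g = x g"
  proof (cases "g \<in> carrier G")
    case True
    have "ga_mult G (hat {\<one>}) x g = (\<Sum>h\<in>carrier G. hat {\<one>} h * x (inv h \<otimes> g))"
      using True by (simp add: ga_mult_def)
    also have "\<dots> = (\<Sum>h\<in>carrier G. if h = \<one> then x g else 0)"
      by (rule sum.cong) (use True in \<open>auto simp: hat_def\<close>)
    also have "\<dots> = x g" using fin by (simp add: sum.delta)
    finally show ?thesis .
  next
    case False then show ?thesis using assms by (simp add: ga_mult_def in_ga_def)
  qed
qed

end
context group begin
lemma inv_mult_eq_one: "h \<in> carrier G \<Longrightarrow> g \<in> carrier G \<Longrightarrow> (inv h \<otimes> g = \<one>) = (h = g)"
proof
  assume "h \<in> carrier G" "g \<in> carrier G" "inv h \<otimes> g = \<one>"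
  then have "h \<otimes> (inv h \<otimes> g) = h" by simp
  then show "h = g" using \<open>h \<in> carrier G\<close> \<open>g \<in> carrier G\<close> by (simp add: m_assoc[symmetric])
qed simp

end
context fgroup begin
lemma hat_one_right:
  assumes "in_ga (carrier G) x"
  shows "ga_mult G x (hat {\<one>}) = x"
proof (rule ext)
  fix g show "ga_mult G x (hat {\<one>}) g = x g"
  proof (cases "g \<in> carrier G")
    case True
    have "ga_mult G x (hat {\<one>}) g = (\<Sum>h\<in>carrier G. x h * hat {\<one>} (inv h \<otimes> g))"
      using True by (simp add: ga_mult_def)
    also have "\<dots> = (\<Sum>h\<in>carrier G. if h = g then x h else 0)"
    proof (rule sum.cong[OF refl])
      fix h assume h: "h \<in> carrier G"
      show "x h * hat {\<one>} (inv h \<otimes> g) = (if h = g then x h else 0)"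
        using inv_mult_eq_one[OF h True] by (simp add: hat_def)
    qed
    also have "\<dots> = x g" using True using fin by (simp add: sum.delta')
    finally show ?thesis .
  next
    case False then show ?thesis using assms by (simp add: ga_mult_def in_ga_def)
  qed
qed


lemma hat_mult_left_eq:
  assumes "N \<subseteq> carrier G" "g \<in> carrier G"
  shows "ga_mult G (hat N) y g = (\<Sum>h\<in>N. y (inv h \<otimes> g)) / of_nat (card N)"
proof -
  have "ga_mult G (hat N) y g = (\<Sum>h\<in>carrier G. if h \<in> N then y (inv h \<otimes> g) / of_nat (card N) else 0)"
    using assms(2) by (auto intro!: sum.cong simp: ga_mult_def hat_def)
  also have "\<dots> = (\<Sum>h\<in>{h\<in>carrier G. h \<in> N}. y (inv h \<otimes> g) / of_nat (card N))"
    by (rule sum.inter_filter[OF fin, symmetric])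
  also have "{h\<in>carrier G. h \<in> N} = N" using assms(1) by auto
  finally show ?thesis by (simp add: sum_divide_distrib)
qed

lemma hat_mult_right_eq:
  assumes "subgroup N G" "g \<in> carrier G"
  shows "ga_mult G y (hat N) g = (\<Sum>h\<in>N. y (g \<otimes> h)) / of_nat (card N)"
proof -
  have NC: "N \<subseteq> carrier G" using assms(1) subgroup.subset by blast
  have "ga_mult G y (hat N) g = (\<Sum>h\<in>carrier G. y h * hat N (inv h \<otimes> g))"
    using assms(2) by (simp add: ga_mult_def)
  also have "\<dots> = (\<Sum>h\<in>carrier G. y (g \<otimes> h) * hat N (inv (g \<otimes> h) \<otimes> g))"
    by (rule sum_transl[OF assms(2), symmetric])
  also have "\<dots> = (\<Sum>h\<in>carrier G. if h \<in> N then y (g \<otimes> h) / of_nat (card N) else 0)"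
  proof (rule sum.cong[OF refl])
    fix h assume h: "h \<in> carrier G"
    have e: "inv (g \<otimes> h) \<otimes> g = inv h" using h assms(2) by (simp add: inv_mult_group m_assoc)
    have "(inv h \<in> N) = (h \<in> N)"
    proof
      assume "inv h \<in> N"
      then have "inv (inv h) \<in> N" by (rule subgroup.m_inv_closed[OF assms(1)])
      then show "h \<in> N" using h by simp
    qed (rule subgroup.m_inv_closed[OF assms(1)])
    then show "y (g \<otimes> h) * hat N (inv (g \<otimes> h) \<otimes> g) = (if h \<in> N then y (g \<otimes> h) / of_nat (card N) else 0)"
      by (simp add: e hat_def)
  qed
  also have "\<dots> = (\<Sum>h\<in>{h\<in>carrier G. h \<in> N}. y (g \<otimes> h) / of_nat (card N))"
    by (rule sum.inter_filter[OF fin, symmetric])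
  also have "{h\<in>carrier G. h \<in> N} = N" using NC by auto
  finally show ?thesis by (simp add: sum_divide_distrib)
qed

lemma normal_conj:
  assumes "subgroup S G" "N \<lhd> G\<lparr>carrier := S\<rparr>" "g \<in> S" "h \<in> N"
  shows "g \<otimes> h \<otimes> inv g \<in> N"
proof -
  have "g \<otimes>\<^bsub>G\<lparr>carrier := S\<rparr>\<^esub> h \<otimes>\<^bsub>G\<lparr>carrier := S\<rparr>\<^esub> inv\<^bsub>G\<lparr>carrier := S\<rparr>\<^esub> g \<in> N"
    using normal.inv_op_closed2[OF assms(2)] assms(3,4) by simp
  then show ?thesis using m_inv_consistent[OF assms(1,3)] by simp
qed


lemma conj_bij:
  assumes S: "subgroup S G" and N: "N \<lhd> G\<lparr>carrier := S\<rparr>" and gS: "g \<in> S"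
  shows "bij_betw (\<lambda>h. g \<otimes> h \<otimes> inv g) N N"
proof -
  have NS: "subgroup N (G\<lparr>carrier := S\<rparr>)" by (rule normal_imp_subgroup[OF N])
  have NsS: "N \<subseteq> S" using subgroup.subset[OF NS] by simp
  have SC: "S \<subseteq> carrier G" using S subgroup.subset by blast
  have igS: "inv g \<in> S" by (rule subgroup.m_inv_closed[OF S gS])
  have g: "g \<in> carrier G" using gS SC by blast
  show ?thesis
  proof (rule bij_betwI[where g="\<lambda>h. inv g \<otimes> h \<otimes> inv (inv g)"])
    show "(\<lambda>h. g \<otimes> h \<otimes> inv g) \<in> N \<rightarrow> N" by (intro funcsetI normal_conj[OF S N gS])
    show "(\<lambda>h. inv g \<otimes> h \<otimes> inv (inv g)) \<in> N \<rightarrow> N" by (intro funcsetI normal_conj[OF S N igS])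
  next
    fix h assume "h \<in> N"
    then have h: "h \<in> carrier G" using NsS SC by blast
    show "inv g \<otimes> (g \<otimes> h \<otimes> inv g) \<otimes> inv (inv g) = h"
      using g h by (simp add: m_assoc cancel1 cancel2)
  next
    fix h assume "h \<in> N"
    then have h: "h \<in> carrier G" using NsS SC by blast
    show "g \<otimes> (inv g \<otimes> h \<otimes> inv (inv g)) \<otimes> inv g = h"
      using g h by (simp add: m_assoc cancel1 cancel2)
  qed
qed

lemma hat_central:
  assumes S: "subgroup S G" and N: "N \<lhd> G\<lparr>carrier := S\<rparr>" and y: "in_ga S y"
  shows "ga_mult G (hat N) y = ga_mult G y (hat N)"
proof (rule ext)
  fix g
  have NS: "subgroup N (G\<lparr>carrier := S\<rparr>)" by (rule normal_imp_subgroup[OF N])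
  have NG: "subgroup N G" by (rule incl_subgroup[OF S NS])
  have NsS: "N \<subseteq> S" using subgroup.subset[OF NS] by simp
  have SC: "S \<subseteq> carrier G" using S subgroup.subset by blast
  show "ga_mult G (hat N) y g = ga_mult G y (hat N) g"
  proof (cases "g \<in> carrier G")
    case g: True
    have "(\<Sum>h\<in>N. y (inv h \<otimes> g)) = (\<Sum>h\<in>N. y (h \<otimes> g))"
    proof -
      have "bij_betw (\<lambda>h. inv h) N N"
      proof (rule bij_betwI[where g="\<lambda>h. inv h"])
        show "(\<lambda>h. inv h) \<in> N \<rightarrow> N" by (intro funcsetI subgroup.m_inv_closed[OF NG])
        show "(\<lambda>h. inv h) \<in> N \<rightarrow> N" by (intro funcsetI subgroup.m_inv_closed[OF NG])
      next
        fix h assume "h \<in> N"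
        then have h: "h \<in> carrier G" using NsS SC by blast
        show "inv (inv h) = h" using h by simp
        show "inv (inv h) = h" using h by simp
      qed
      then show ?thesis by (rule sum.reindex_bij_betw)
    qed
    also have "\<dots> = (\<Sum>h\<in>N. y (g \<otimes> h))"
    proof (cases "g \<in> S")
      case gS: True
      have "(\<Sum>h\<in>N. y ((g \<otimes> h \<otimes> inv g) \<otimes> g)) = (\<Sum>h\<in>N. y (h \<otimes> g))"
        using conj_bij[OF S N gS] by (rule sum.reindex_bij_betw)
      moreover have "(\<Sum>h\<in>N. y ((g \<otimes> h \<otimes> inv g) \<otimes> g)) = (\<Sum>h\<in>N. y (g \<otimes> h))"
      proof (rule sum.cong[OF refl])
        fix h assume "h \<in> N"
        then have h: "h \<in> carrier G" using NsS SC by blast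
        have "(g \<otimes> h \<otimes> inv g) \<otimes> g = g \<otimes> h" using g h by (simp add: m_assoc)
        then show "y ((g \<otimes> h \<otimes> inv g) \<otimes> g) = y (g \<otimes> h)" by simp
      qed
      ultimately show ?thesis by simp
    next
      case gS: False
      have "y (h \<otimes> g) = 0 \<and> y (g \<otimes> h) = 0" if hN: "h \<in> N" for h
      proof -
        have hS: "h \<in> S" using hN NsS by blast
        have h: "h \<in> carrier G" using hS SC by blast
        have ihS: "inv h \<in> S" by (rule subgroup.m_inv_closed[OF S hS])
        have "h \<otimes> g \<notin> S"
        proof
          assume "h \<otimes> g \<in> S"
          with ihS have "inv h \<otimes> (h \<otimes> g) \<in> S" by (rule subgroup.m_closed[OF S])
          then show False using gS g h by (simp add: cancel1)
        qed
        moreover have "g \<otimes> h \<notin> S"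
        proof
          assume "g \<otimes> h \<in> S"
          then have "(g \<otimes> h) \<otimes> inv h \<in> S" using ihS by (rule subgroup.m_closed[OF S])
          then show False using gS g h by (simp add: m_assoc)
        qed
        ultimately show ?thesis using y by (simp add: in_ga_def)
      qed
      then show ?thesis by simp
    qed
    finally have eq: "(\<Sum>h\<in>N. y (inv h \<otimes> g)) = (\<Sum>h\<in>N. y (g \<otimes> h))" .
    have "ga_mult G (hat N) y g = (\<Sum>h\<in>N. y (inv h \<otimes> g)) / of_nat (card N)"
      using NsS SC g by (intro hat_mult_left_eq) auto
    also have "\<dots> = (\<Sum>h\<in>N. y (g \<otimes> h)) / of_nat (card N)" using eq by simp
    also have "\<dots> = ga_mult G y (hat N) g" using hat_mult_right_eq[OF NG g, of y] by simp
    finally show ?thesis .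
  next
    case False then show ?thesis by (simp add: ga_mult_def)
  qed
qed

lemma hat_mult:
  assumes NG: "subgroup N G" and MG: "subgroup M G"
  shows "ga_mult G (hat N) (hat M) = hat (N <#> M)"
proof -
  have NC: "N \<subseteq> carrier G" using subgroup.subset[OF NG] .
  have MC: "M \<subseteq> carrier G" using subgroup.subset[OF MG] .
  have finN: "finite N" using finite_subset[OF NC fin] .
  have finM: "finite M" using finite_subset[OF MC fin] .
  have NMC: "N <#> M \<subseteq> carrier G" using NC MC by (auto simp: set_mult_def)
  define S where "S g = {h \<in> N. inv h \<otimes> g \<in> M}" for g
  have S_empty: "S g = {}" if "g \<in> carrier G" "g \<notin> N <#> M" for g
  proof (rule ccontr)
    assume "S g \<noteq> {}"
    then obtain h where hN: "h \<in> N" and hM: "inv h \<otimes> g \<in> M" by (auto simp: S_def)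
    have h: "h \<in> carrier G" using hN NC by blast
    have "g = h \<otimes> (inv h \<otimes> g)" using h that(1) by (simp add: cancel2)
    then have "g \<in> N <#> M" using hN hM unfolding set_mult_def by blast
    with that(2) show False by blast
  qed
  have S_card: "card (S g) = card (N \<inter> M)" if gNM: "g \<in> N <#> M" for g
  proof -
    obtain n0 m0 where n0: "n0 \<in> N" and m0: "m0 \<in> M" and gnm: "g = n0 \<otimes> m0"
      using gNM unfolding set_mult_def by blast
    have n0C: "n0 \<in> carrier G" using n0 NC by blast
    have m0C: "m0 \<in> carrier G" using m0 MC by blast
    have "bij_betw (\<lambda>x. n0 \<otimes> x) (N \<inter> M) (S g)"
    proof (rule bij_betwI[where g="\<lambda>h. inv n0 \<otimes> h"])
      show "(\<lambda>x. n0 \<otimes> x) \<in> N \<inter> M \<rightarrow> S g"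
      proof
        fix x assume x: "x \<in> N \<inter> M"
        have xC: "x \<in> carrier G" using x NC by blast
        have "n0 \<otimes> x \<in> N" using n0 x subgroup.m_closed[OF NG] by blast
        moreover have "inv (n0 \<otimes> x) \<otimes> g = inv x \<otimes> m0"
          using gnm n0C xC m0C by (simp add: inv_mult_group m_assoc cancel1)
        moreover have "inv x \<otimes> m0 \<in> M"
          using subgroup.m_closed[OF MG subgroup.m_inv_closed[OF MG] m0] x by blast
        ultimately show "n0 \<otimes> x \<in> S g" by (simp add: S_def)
      qed
      show "(\<lambda>h. inv n0 \<otimes> h) \<in> S g \<rightarrow> N \<inter> M"
      proof
        fix h assume h: "h \<in> S g"
        then have hN: "h \<in> N" and hM: "inv h \<otimes> g \<in> M" by (auto simp: S_def)
        have hC: "h \<in> carrier G" using hN NC by blast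
        have "inv n0 \<otimes> h \<in> N"
          using subgroup.m_closed[OF NG subgroup.m_inv_closed[OF NG n0] hN] .
        moreover have "inv n0 \<otimes> h = m0 \<otimes> inv (inv h \<otimes> g)"
          using gnm n0C hC m0C by (simp add: inv_mult_group m_assoc cancel1 cancel2)
        moreover have "m0 \<otimes> inv (inv h \<otimes> g) \<in> M"
          using subgroup.m_closed[OF MG m0 subgroup.m_inv_closed[OF MG hM]] .
        ultimately show "inv n0 \<otimes> h \<in> N \<inter> M" by simp
      qed
    next
      fix x assume "x \<in> N \<inter> M"
      then have xC: "x \<in> carrier G" using NC by blast
      show "inv n0 \<otimes> (n0 \<otimes> x) = x" using xC n0C by (simp add: cancel1)
    next
      fix h assume "h \<in> S g"
      then have hC: "h \<in> carrier G" using NC by (auto simp: S_def)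
      show "n0 \<otimes> (inv n0 \<otimes> h) = h" using hC n0C by (simp add: cancel2)
    qed
    then show ?thesis by (simp add: bij_betw_same_card)
  qed
  have cnt1: "(\<Sum>g\<in>carrier G. card (S g)) = card N * card M"
  proof -
    have "(\<Sum>g\<in>carrier G. card (S g)) = (\<Sum>g\<in>carrier G. \<Sum>h\<in>N. if inv h \<otimes> g \<in> M then 1 else 0)"
    proof (rule sum.cong[OF refl])
      fix g
      have "card (S g) = (\<Sum>h\<in>{h \<in> N. inv h \<otimes> g \<in> M}. (1::nat))" by (simp add: S_def)
      also have "\<dots> = (\<Sum>h\<in>N. if inv h \<otimes> g \<in> M then 1 else 0)"
        by (rule sum.inter_filter[OF finN])
      finally show "card (S g) = (\<Sum>h\<in>N. if inv h \<otimes> g \<in> M then 1 else 0)" .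
    qed
    also have "\<dots> = (\<Sum>h\<in>N. \<Sum>g\<in>carrier G. if inv h \<otimes> g \<in> M then 1 else 0)"
      by (rule sum.swap)
    also have "\<dots> = (\<Sum>h\<in>N. card M)"
    proof (rule sum.cong[OF refl])
      fix h assume "h \<in> N"
      then have hC: "h \<in> carrier G" using NC by blast
      have "(\<Sum>g\<in>carrier G. if inv h \<otimes> g \<in> M then 1 else (0::nat))
          = (\<Sum>g\<in>carrier G. if inv h \<otimes> (h \<otimes> g) \<in> M then 1 else 0)"
        by (rule sum_transl[OF hC, symmetric])
      also have "\<dots> = (\<Sum>g\<in>carrier G. if g \<in> M then 1 else 0)"
        by (rule sum.cong[OF refl]) (simp add: hC cancel1)
      also have "\<dots> = (\<Sum>g\<in>{g\<in>carrier G. g \<in> M}. 1)"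
        by (rule sum.inter_filter[OF fin, symmetric])
      also have "{g\<in>carrier G. g \<in> M} = M" using MC by blast
      finally show "(\<Sum>g\<in>carrier G. if inv h \<otimes> g \<in> M then 1 else (0::nat)) = card M" by simp
    qed
    finally show ?thesis by simp
  qed
  have cnt2: "(\<Sum>g\<in>carrier G. card (S g)) = card (N <#> M) * card (N \<inter> M)"
  proof -
    have "(\<Sum>g\<in>carrier G. card (S g)) = (\<Sum>g\<in>carrier G. if g \<in> N <#> M then card (N \<inter> M) else 0)"
      by (rule sum.cong[OF refl]) (simp add: S_card S_empty)
    also have "\<dots> = (\<Sum>g\<in>{g\<in>carrier G. g \<in> N <#> M}. card (N \<inter> M))"
      by (rule sum.inter_filter[OF fin, symmetric])
    also have "{g\<in>carrier G. g \<in> N <#> M} = N <#> M" using NMC by blast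
    finally show ?thesis by simp
  qed
  have pN: "card N > 0" using finN subgroup.one_closed[OF NG] by (auto simp: card_gt_0_iff)
  have pM: "card M > 0" using finM subgroup.one_closed[OF MG] by (auto simp: card_gt_0_iff)
  have key: "card (N <#> M) * card (N \<inter> M) = card N * card M" using cnt1 cnt2 by simp
  have pNM: "card (N <#> M) > 0" using key pN pM by (metis mult_eq_0_iff neq0_conv)
  show ?thesis
  proof (rule ext)
    fix g
    show "ga_mult G (hat N) (hat M) g = hat (N <#> M) g"
    proof (cases "g \<in> carrier G")
      case g: True
      have "ga_mult G (hat N) (hat M) g = (\<Sum>h\<in>N. hat M (inv h \<otimes> g)) / of_nat (card N)"
        by (rule hat_mult_left_eq[OF NC g])
      also have "(\<Sum>h\<in>N. hat M (inv h \<otimes> g)) = (\<Sum>h\<in>N. if inv h \<otimes> g \<in> M then 1 / of_nat (card M) else 0)"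
        by (simp add: hat_def)
      also have "\<dots> = (\<Sum>h\<in>S g. 1 / of_nat (card M))"
        unfolding S_def by (rule sum.inter_filter[OF finN, symmetric])
      also have "\<dots> = of_nat (card (S g)) / of_nat (card M)" by simp
      finally have eq: "ga_mult G (hat N) (hat M) g = of_nat (card (S g)) / of_nat (card M) / of_nat (card N)" .
      show ?thesis
      proof (cases "g \<in> N <#> M")
        case True
        have k: "(of_nat (card (N <#> M)) :: rat) * of_nat (card (N \<inter> M)) = of_nat (card N) * of_nat (card M)"
          using key by (metis of_nat_mult)
        have "ga_mult G (hat N) (hat M) g = of_nat (card (N \<inter> M)) / of_nat (card M) / of_nat (card N)"
          using eq S_card[OF True] by simp
        also have "\<dots> = 1 / of_nat (card (N <#> M))"
          using k pN pM pNM by (simp add: field_simps)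
        finally show ?thesis using True by (simp add: hat_def)
      next
        case False
        then show ?thesis using eq S_empty[OF g False] by (simp add: hat_def)
      qed
    next
      case False
      then show ?thesis using NMC by (auto simp: ga_mult_def hat_def)
    qed
  qed
qed

definition cent :: "'a set \<Rightarrow> ('a \<Rightarrow> rat) \<Rightarrow> bool" where
  "cent T x \<longleftrightarrow> in_ga T x \<and> (\<forall>y. in_ga T y \<longrightarrow> ga_mult G x y = ga_mult G y x)"

definition pl :: "('c \<Rightarrow> ('a \<Rightarrow> rat)) \<Rightarrow> 'c list \<Rightarrow> ('a \<Rightarrow> rat)" where
  "pl f xs = foldr (\<lambda>L acc. ga_mult G (f L) acc) xs (hat {\<one>})"

lemma pl_Nil: "pl f [] = hat {\<one>}" by (simp add: pl_def)
lemma pl_Cons: "pl f (a # xs) = ga_mult G (f a) (pl f xs)" by (simp add: pl_def)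

lemma ga_prod_pl:
  assumes "finite S"
  obtains xs where "set xs = S" "ga_prod G S f = pl f xs"
proof -
  let ?xs = "SOME xs. distinct xs \<and> set xs = S"
  have "distinct ?xs \<and> set ?xs = S"
    by (rule someI_ex) (use finite_distinct_list[OF assms] in blast)
  then show ?thesis using that[of ?xs] by (simp add: ga_prod_def pl_def)
qed

lemma in_ga_carrier:
  assumes "subgroup T G" "in_ga T y" shows "in_ga (carrier G) y"
proof -
  have "T \<subseteq> carrier G" by (rule subgroup.subset[OF assms(1)])
  then show ?thesis using assms(2) unfolding in_ga_def by blast
qed

lemma pl_props:
  assumes T: "subgroup T G"
    and fs: "\<And>L. L \<in> set xs \<Longrightarrow> cent T (f L) \<and> ga_mult G (f L) (f L) = f L"
  shows "cent T (pl f xs) \<and> ga_mult G (pl f xs) (pl f xs) = pl f xs"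
  using fs
proof (induction xs)
  case Nil
  have o: "in_ga T (hat {\<one>})" using subgroup.one_closed[OF T] by (intro hat_in_ga) simp
  have "ga_mult G (hat {\<one>}) y = ga_mult G y (hat {\<one>})" if "in_ga T y" for y
    using hat_one_left[OF in_ga_carrier[OF T that]] hat_one_right[OF in_ga_carrier[OF T that]] by simp
  moreover have "ga_mult G (hat {\<one>}) (hat {\<one>}) = hat {\<one>}"
    using hat_one_left[OF in_ga_carrier[OF T o]] .
  ultimately show ?case using o unfolding pl_Nil cent_def by blast
next
  case (Cons a xs)
  define u where "u = f a"
  define R where "R = pl f xs"
  have IH: "cent T R \<and> ga_mult G R R = R" using Cons by (simp add: R_def)
  have U: "cent T u \<and> ga_mult G u u = u" using Cons.prems by (simp add: u_def)
  have inR: "in_ga T R" and inU: "in_ga T u" using IH U by (auto simp: cent_def)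
  have cR: "\<And>y. in_ga T y \<Longrightarrow> ga_mult G R y = ga_mult G y R" using IH by (auto simp: cent_def)
  have cU: "\<And>y. in_ga T y \<Longrightarrow> ga_mult G u y = ga_mult G y u" using U by (auto simp: cent_def)
  have inP: "in_ga T (ga_mult G u R)" by (rule in_ga_mult[OF T inU inR])
  have "ga_mult G (ga_mult G u R) y = ga_mult G y (ga_mult G u R)" if y: "in_ga T y" for y
  proof -
    have "ga_mult G (ga_mult G u R) y = ga_mult G u (ga_mult G R y)" by (rule ga_assoc)
    also have "\<dots> = ga_mult G u (ga_mult G y R)" using cR[OF y] by simp
    also have "\<dots> = ga_mult G (ga_mult G u y) R" by (rule ga_assoc[symmetric])
    also have "\<dots> = ga_mult G (ga_mult G y u) R" using cU[OF y] by simp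
    also have "\<dots> = ga_mult G y (ga_mult G u R)" by (rule ga_assoc)
    finally show ?thesis .
  qed
  moreover have "ga_mult G (ga_mult G u R) (ga_mult G u R) = ga_mult G u R"
  proof -
    have "ga_mult G (ga_mult G u R) (ga_mult G u R) = ga_mult G u (ga_mult G R (ga_mult G u R))"
      by (rule ga_assoc)
    also have "ga_mult G R (ga_mult G u R) = ga_mult G (ga_mult G R u) R" by (rule ga_assoc[symmetric])
    also have "ga_mult G R u = ga_mult G u R" using cR[OF inU] by simp
    also have "ga_mult G (ga_mult G u R) R = ga_mult G u R" using IH by (simp add: ga_assoc)
    also have "ga_mult G u (ga_mult G u R) = ga_mult G u R" using U by (simp add: ga_assoc[symmetric])
    finally show ?thesis .
  qed
  ultimately show ?case using inP unfolding pl_Cons cent_def u_def[symmetric] R_def[symmetric] by blast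
qed

lemma pl_absorb_left:
  assumes "xs \<noteq> []" "\<And>L. L \<in> set xs \<Longrightarrow> ga_mult G u (f L) = f L"
  shows "ga_mult G u (pl f xs) = pl f xs"
proof -
  obtain a ys where xs: "xs = a # ys" using assms(1) by (cases xs) auto
  have "ga_mult G u (pl f xs) = ga_mult G (ga_mult G u (f a)) (pl f ys)"
    by (simp add: xs pl_Cons ga_assoc)
  also have "\<dots> = pl f xs" using assms(2)[of a] by (simp add: xs pl_Cons)
  finally show ?thesis .
qed

lemma pl_absorb_right:
  assumes "in_ga (carrier G) E" "\<And>L. L \<in> set xs \<Longrightarrow> ga_mult G (f L) E = E"
  shows "ga_mult G (pl f xs) E = E"
  using assms(2)
proof (induction xs)
  case Nil then show ?case by (simp add: pl_Nil hat_one_left[OF assms(1)])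
next
  case (Cons a xs)
  then show ?case by (simp add: pl_Cons ga_assoc)
qed

lemma pl_zero:
  assumes T: "subgroup T G" and u: "in_ga T u"
    and fs: "\<And>L. L \<in> set xs \<Longrightarrow> cent T (f L)"
    and L: "L \<in> set xs" and z: "ga_mult G u (f L) = (\<lambda>_. 0)"
  shows "ga_mult G u (pl f xs) = (\<lambda>_. 0)"
  using fs L
proof (induction xs)
  case Nil then show ?case by simp
next
  case (Cons a xs)
  show ?case
  proof (cases "a = L")
    case True
    have "ga_mult G u (pl f (a # xs)) = ga_mult G (ga_mult G u (f a)) (pl f xs)"
      by (simp add: pl_Cons ga_assoc)
    then show ?thesis using True z by (simp add: ga_mult_zero_left)
  next
    case False
    then have Lx: "L \<in> set xs" using Cons.prems by simp
    have IH: "ga_mult G u (pl f xs) = (\<lambda>_. 0)" using Cons Lx by simp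
    have ca: "ga_mult G (f a) u = ga_mult G u (f a)" using Cons.prems(1)[of a] u unfolding cent_def by simp
    have "ga_mult G u (pl f (a # xs)) = ga_mult G (ga_mult G u (f a)) (pl f xs)"
      by (simp add: pl_Cons ga_assoc)
    also have "\<dots> = ga_mult G (f a) (ga_mult G u (pl f xs))" by (simp add: ca[symmetric] ga_assoc)
    finally show ?thesis using IH by (simp add: ga_mult_zero_right)
  qed
qed

lemma sm_sub:
  assumes K: "subgroup K G" and L: "subgroup L G" and KL: "K \<subseteq> L"
  shows "K <#> L = L" "L <#> K = L"
proof -
  have "K <#> L \<subseteq> L <#> L" "L <#> K \<subseteq> L <#> L" using KL by (auto simp: set_mult_def)
  moreover have "L <#> L = L" by (rule subgroup_mult_id[OF L])
  moreover have "L \<subseteq> K <#> L"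
  proof
    fix l assume l: "l \<in> L"
    then have "l = \<one> \<otimes> l" using subgroup.subset[OF L] by auto
    then show "l \<in> K <#> L" using l subgroup.one_closed[OF K] unfolding set_mult_def by blast
  qed
  moreover have "L \<subseteq> L <#> K"
  proof
    fix l assume l: "l \<in> L"
    then have "l = l \<otimes> \<one>" using subgroup.subset[OF L] by auto
    then show "l \<in> L <#> K" using l subgroup.one_closed[OF K] unfolding set_mult_def by blast
  qed
  ultimately show "K <#> L = L" "L <#> K = L" by auto
qed

lemma hat_absorb:
  assumes K: "subgroup K G" and L: "subgroup L G" and KL: "K \<subseteq> L"
  shows "ga_mult G (hat K) (hat L) = hat L" "ga_mult G (hat L) (hat K) = hat L"
  using hat_mult[OF K L] hat_mult[OF L K] sm_sub[OF K L KL] by simp_all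

lemma hat_idem: "subgroup N G \<Longrightarrow> ga_mult G (hat N) (hat N) = hat N"
  using hat_absorb[of N N] by simp

lemma cent_sub: "cent S a \<Longrightarrow> cent S b \<Longrightarrow> cent S (ga_sub a b)"
  unfolding cent_def by (simp add: in_ga_sub ga_mult_sub_left ga_mult_sub_right)

lemma cent_hat:
  assumes S: "subgroup S G" and K: "K \<lhd> G\<lparr>carrier := S\<rparr>"
  shows "cent S (hat K)"
proof -
  have "K \<subseteq> S" using subgroup.subset[OF normal_imp_subgroup[OF K]] by simp
  then show ?thesis unfolding cent_def using hat_in_ga hat_central[OF S K] by blast
qed

lemma sub_of_normal:
  assumes S: "subgroup S G" and K: "K \<lhd> G\<lparr>carrier := S\<rparr>"
  shows "subgroup K G"
  by (rule incl_subgroup[OF S normal_imp_subgroup[OF K]])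

lemma fac_props:
  assumes S: "subgroup S G" and K: "K \<lhd> G\<lparr>carrier := S\<rparr>" and L: "L \<lhd> G\<lparr>carrier := S\<rparr>"
    and KL: "K \<subseteq> L"
  shows "cent S (ga_sub (hat K) (hat L)) \<and>
         ga_mult G (ga_sub (hat K) (hat L)) (ga_sub (hat K) (hat L)) = ga_sub (hat K) (hat L)"
proof
  show "cent S (ga_sub (hat K) (hat L))" by (intro cent_sub cent_hat S K L)
  have sK: "subgroup K G" by (rule sub_of_normal[OF S K])
  have sL: "subgroup L G" by (rule sub_of_normal[OF S L])
  show "ga_mult G (ga_sub (hat K) (hat L)) (ga_sub (hat K) (hat L)) = ga_sub (hat K) (hat L)"
  proof -
    have "ga_mult G (ga_sub (hat K) (hat L)) (ga_sub (hat K) (hat L))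
      = ga_sub (ga_sub (ga_mult G (hat K) (hat K)) (ga_mult G (hat L) (hat K)))
               (ga_sub (ga_mult G (hat K) (hat L)) (ga_mult G (hat L) (hat L)))"
      by (simp add: ga_mult_sub_left ga_mult_sub_right)
    also have "\<dots> = ga_sub (ga_sub (hat K) (hat L)) (ga_sub (hat L) (hat L))"
      by (simp only: hat_idem[OF sK] hat_idem[OF sL] hat_absorb[OF sK sL KL])
    also have "\<dots> = ga_sub (hat K) (hat L)" by (simp add: ga_sub_def)
    finally show ?thesis .
  qed
qed

lemma fac_absorb:
  assumes D: "subgroup D G" and K: "subgroup K G" and L: "subgroup L G"
    and DK: "D \<subseteq> K" and KL: "K \<subseteq> L"
  shows "ga_mult G (hat D) (ga_sub (hat K) (hat L)) = ga_sub (hat K) (hat L)"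
  using DK KL by (simp add: ga_mult_sub_right hat_absorb[OF D K DK] hat_absorb[OF D L])

end



locale lsetup = fgroup +
  fixes H K A :: "'a set"
  assumes sH: "subgroup H G" and nK: "K \<lhd> G\<lparr>carrier := H\<rparr>"
    and cyc: "cyclic_group (G\<lparr>carrier := H\<rparr> Mod K)" and nA: "A \<lhd> G\<lparr>carrier := H\<rparr>"
begin

lemma SGg: "group (G\<lparr>carrier := H\<rparr>)" by (rule subgroup.subgroup_is_group[OF sH is_group])

lemma ab: "comm_group (G\<lparr>carrier := H\<rparr> Mod K)"
  by (rule group.cyclic_imp_abelian_group[OF normal.factorgroup_is_group[OF nK] cyc])

lemma sK: "subgroup K G" by (rule sub_of_normal[OF sH nK])
lemma sA: "subgroup A G" by (rule sub_of_normal[OF sH nA])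
lemma KH: "K \<subseteq> H" using subgroup.subset[OF normal_imp_subgroup[OF nK]] by simp
lemma AH: "A \<subseteq> H" using subgroup.subset[OF normal_imp_subgroup[OF nA]] by simp
lemma HC: "H \<subseteq> carrier G" by (rule subgroup.subset[OF sH])
lemma finH: "finite H" using finite_subset[OF HC fin] .

lemma nD: "K \<inter> A \<lhd> G\<lparr>carrier := H\<rparr>" by (rule group.normal_subgroup_intersect[OF SGg nK nA])
lemma sD: "subgroup (K \<inter> A) G" by (rule sub_of_normal[OF sH nD])

lemma mnoH: "L \<in> min_normal_over G H K \<Longrightarrow> L \<lhd> G\<lparr>carrier := H\<rparr> \<and> K \<subset> L"
  by (simp add: min_normal_over_def)

lemma fin_mnoH: "finite (min_normal_over G H K)"
proof -
  have "min_normal_over G H K \<subseteq> Pow H"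
    using mnoH subgroup.subset[OF normal_imp_subgroup] by fastforce
  then show ?thesis using finH by (meson finite_Pow_iff finite_subset)
qed

lemma mnoH_ne: assumes "H \<noteq> K" shows "min_normal_over G H K \<noteq> {}"
proof -
  have "K \<noteq> carrier (G\<lparr>carrier := H\<rparr>)" using assms by simp
  from group.exists_min_normal[OF SGg _ nK this] finH
  obtain L where "L \<lhd> G\<lparr>carrier := H\<rparr>" "K \<subset> L"
      "minimal_normal (G\<lparr>carrier := H\<rparr> Mod K) ((\<lambda>l. K #>\<^bsub>G\<lparr>carrier := H\<rparr>\<^esub> l) ` L)"
    by auto
  then have "L \<in> min_normal_over G H K" by (simp add: min_normal_over_def)
  then show ?thesis by blast
qed

lemma mnoA:
  assumes M: "M \<in> min_normal_over G A (K \<inter> A)"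
  shows "M \<lhd> G\<lparr>carrier := H\<rparr> \<and> K \<inter> A \<subset> M \<and> K <#> M \<in> min_normal_over G H K \<and> M \<subseteq> K <#> M"
proof -
  have M1: "M \<lhd> G\<lparr>carrier := H\<rparr>\<lparr>carrier := A\<rparr>" using M by (simp add: min_normal_over_def)
  have M2: "K \<inter> A \<subset> M" using M by (simp add: min_normal_over_def)
  have M3: "minimal_normal (G\<lparr>carrier := H\<rparr>\<lparr>carrier := A\<rparr> Mod (K \<inter> A))
      ((\<lambda>l. (K \<inter> A) #>\<^bsub>G\<lparr>carrier := H\<rparr>\<^esub> l) ` M)"
    using M by (simp add: min_normal_over_def)
  note g4 = group.G4[OF SGg nK nA ab M1 M2 M3]
  then show ?thesis using M2 by (simp add: min_normal_over_def)
qed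

lemma fin_mnoA: "finite (min_normal_over G A (K \<inter> A))"
proof -
  have "min_normal_over G A (K \<inter> A) \<subseteq> Pow H"
    using mnoA AH subgroup.subset[OF normal_imp_subgroup] by fastforce
  then show ?thesis using finH by (meson finite_Pow_iff finite_subset)
qed

definition fH where "fH = (\<lambda>L. ga_sub (hat K) (hat L))"
definition fA where "fA = (\<lambda>L. ga_sub (hat (K \<inter> A)) (hat L))"

lemma eps_H_form:
  assumes "H \<noteq> K"
  obtains xs where "set xs = min_normal_over G H K" "eps G H K = pl fH xs"
proof -
  obtain xs where "set xs = min_normal_over G H K"
    "ga_prod G (min_normal_over G H K) fH = pl fH xs"
    using ga_prod_pl[OF fin_mnoH] by blast
  then show ?thesis using that assms by (simp add: eps_def fH_def)
qed

lemma eps_A_form: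
  assumes "A \<noteq> K \<inter> A"
  obtains xs where "set xs = min_normal_over G A (K \<inter> A)" "eps G A (K \<inter> A) = pl fA xs"
proof -
  obtain xs where "set xs = min_normal_over G A (K \<inter> A)"
    "ga_prod G (min_normal_over G A (K \<inter> A)) fA = pl fA xs"
    using ga_prod_pl[OF fin_mnoA] by blast
  then show ?thesis using that assms by (simp add: eps_def fA_def)
qed

lemma fH_props:
  assumes "L \<in> min_normal_over G H K"
  shows "cent H (fH L) \<and> ga_mult G (fH L) (fH L) = fH L"
  using mnoH[OF assms] fac_props[OF sH nK, of L] unfolding fH_def by blast

lemma fA_props:
  assumes "M \<in> min_normal_over G A (K \<inter> A)"
  shows "cent H (fA M) \<and> ga_mult G (fA M) (fA M) = fA M"
  using mnoA[OF assms] fac_props[OF sH nD, of M] unfolding fA_def by blast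

lemma eps_H_props: "cent H (eps G H K) \<and> ga_mult G (eps G H K) (eps G H K) = eps G H K"
proof (cases "H = K")
  case True
  then show ?thesis using cent_hat[OF sH nK] hat_idem[OF sK] by (simp add: eps_def)
next
  case False
  then obtain xs where xs: "set xs = min_normal_over G H K" "eps G H K = pl fH xs"
    by (rule eps_H_form)
  show ?thesis unfolding xs(2) by (rule pl_props[OF sH]) (use fH_props xs(1) in blast)
qed

lemma eps_A_props: "cent H (eps G A (K \<inter> A)) \<and> ga_mult G (eps G A (K \<inter> A)) (eps G A (K \<inter> A)) = eps G A (K \<inter> A)"
proof (cases "A = K \<inter> A")
  case True
  then have "eps G A (K \<inter> A) = hat (K \<inter> A)" by (simp add: eps_def)
  then show ?thesis using cent_hat[OF sH nD] hat_idem[OF sD] by simp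
next
  case False
  then obtain xs where xs: "set xs = min_normal_over G A (K \<inter> A)" "eps G A (K \<inter> A) = pl fA xs"
    by (rule eps_A_form)
  show ?thesis unfolding xs(2) by (rule pl_props[OF sH]) (use fA_props xs(1) in blast)
qed

lemma absorbD: "ga_mult G (hat (K \<inter> A)) (eps G H K) = eps G H K"
proof (cases "H = K")
  case True
  then show ?thesis using hat_absorb(1)[OF sD sK] by (simp add: eps_def)
next
  case False
  then obtain xs where xs: "set xs = min_normal_over G H K" "eps G H K = pl fH xs"
    by (rule eps_H_form)
  have "xs \<noteq> []" using xs(1) mnoH_ne[OF False] by auto
  then show ?thesis unfolding xs(2)
  proof (rule pl_absorb_left)
    fix L assume "L \<in> set xs"
    then have L: "L \<lhd> G\<lparr>carrier := H\<rparr>" "K \<subset> L" using mnoH xs(1) by auto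
    show "ga_mult G (hat (K \<inter> A)) (fH L) = fH L"
      unfolding fH_def using L(2) by (intro fac_absorb[OF sD sK sub_of_normal[OF sH L(1)]]) auto
  qed
qed

lemma killM:
  assumes M: "M \<in> min_normal_over G A (K \<inter> A)"
  shows "ga_mult G (hat M) (eps G H K) = (\<lambda>_. 0)"
proof -
  have Mp: "M \<lhd> G\<lparr>carrier := H\<rparr>" "K \<inter> A \<subset> M" "K <#> M \<in> min_normal_over G H K" "M \<subseteq> K <#> M"
    using mnoA[OF M] by auto
  have MA: "M \<subseteq> A"
    using M subgroup.subset[OF normal_imp_subgroup] by (fastforce simp: min_normal_over_def)
  have HK: "H \<noteq> K"
  proof
    assume "H = K"
    then have "K \<inter> A = A" using AH by blast
    then show False using Mp(2) MA by blast
  qed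
  obtain xs where xs: "set xs = min_normal_over G H K" "eps G H K = pl fH xs"
    by (rule eps_H_form[OF HK])
  define L where "L = K <#> M"
  have LH: "L \<in> min_normal_over G H K" using Mp(3) by (simp add: L_def)
  have nL: "L \<lhd> G\<lparr>carrier := H\<rparr>" using mnoH[OF LH] by blast
  have sM: "subgroup M G" by (rule sub_of_normal[OF sH Mp(1)])
  have sL: "subgroup L G" by (rule sub_of_normal[OF sH nL])
  have MH: "M \<subseteq> H" using MA AH by blast
  have inM: "in_ga H (hat M)" by (rule hat_in_ga[OF MH])
  have z: "ga_mult G (hat M) (fH L) = (\<lambda>_. 0)"
  proof -
    have "ga_mult G (hat M) (hat K) = ga_mult G (hat K) (hat M)"
      using hat_central[OF sH nK inM] by simp
    also have "\<dots> = hat L" unfolding L_def by (rule hat_mult[OF sK sM])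
    finally have 1: "ga_mult G (hat M) (hat K) = hat L" .
    have 2: "ga_mult G (hat M) (hat L) = hat L"
      by (rule hat_absorb(1)[OF sM sL]) (use Mp(4) in \<open>simp add: L_def\<close>)
    show ?thesis unfolding fH_def ga_mult_sub_right 1 2 by (rule ga_sub_self)
  qed
  have fs: "\<And>L. L \<in> set xs \<Longrightarrow> cent H (fH L)" using fH_props xs(1) by blast
  have Lx: "L \<in> set xs" using LH xs(1) by simp
  show ?thesis unfolding xs(2) by (rule pl_zero[where f=fH and xs=xs and L=L, OF sH inM fs Lx z])
qed

lemma main_absorb: "ga_mult G (eps G A (K \<inter> A)) (eps G H K) = eps G H K"
proof (cases "A = K \<inter> A")
  case True
  then have "eps G A (K \<inter> A) = hat (K \<inter> A)" by (simp add: eps_def)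
  then show ?thesis using absorbD by simp
next
  case False
  then obtain xs where xs: "set xs = min_normal_over G A (K \<inter> A)" "eps G A (K \<inter> A) = pl fA xs"
    by (rule eps_A_form)
  have inE: "in_ga (carrier G) (eps G H K)"
    using eps_H_props in_ga_carrier[OF sH] unfolding cent_def by blast
  show ?thesis unfolding xs(2)
  proof (rule pl_absorb_right[OF inE])
    fix M assume "M \<in> set xs"
    then have M: "M \<in> min_normal_over G A (K \<inter> A)" using xs(1) by simp
    show "ga_mult G (fA M) (eps G H K) = eps G H K"
      unfolding fA_def ga_mult_sub_left absorbD killM[OF M] by (simp add: ga_sub_def)
  qed
qed

lemma final:
  "\<exists>e. in_ga H e
           \<and> ga_mult G e e = e
           \<and> (\<forall>y. in_ga H y \<longrightarrow> ga_mult G e y = ga_mult G y e)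
           \<and> ga_mult G e (eps G H K) = (\<lambda>_. 0)
           \<and> ga_mult G (eps G H K) e = (\<lambda>_. 0)
           \<and> eps G A (K \<inter> A) = ga_add (eps G H K) e"
proof -
  define a where "a = eps G A (K \<inter> A)"
  define b where "b = eps G H K"
  have ca: "cent H a" and ia: "ga_mult G a a = a" using eps_A_props unfolding a_def by auto
  have cb: "cent H b" and ib: "ga_mult G b b = b" using eps_H_props unfolding b_def by auto
  have ab: "ga_mult G a b = b" unfolding a_def b_def by (rule main_absorb)
  have ina: "in_ga H a" and inb: "in_ga H b" using ca cb unfolding cent_def by auto
  have ba: "ga_mult G b a = b"
  proof -
    have "ga_mult G b a = ga_mult G a b" using cb ina unfolding cent_def by blast
    then show ?thesis using ab by simp
  qed
  define e where "e = ga_sub a b"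
  have "in_ga H e" unfolding e_def by (rule in_ga_sub[OF ina inb])
  moreover have "ga_mult G e e = e"
  proof -
    have "ga_mult G e e = ga_sub (ga_sub (ga_mult G a a) (ga_mult G b a)) (ga_sub (ga_mult G a b) (ga_mult G b b))"
      unfolding e_def by (simp only: ga_mult_sub_left ga_mult_sub_right)
    also have "\<dots> = ga_sub (ga_sub a b) (ga_sub b b)" by (simp only: ia ib ab ba)
    also have "\<dots> = e" unfolding e_def by (simp add: ga_sub_def)
    finally show ?thesis .
  qed
  moreover have "\<forall>y. in_ga H y \<longrightarrow> ga_mult G e y = ga_mult G y e"
  proof (intro allI impI)
    fix y assume y: "in_ga H y"
    have "ga_mult G a y = ga_mult G y a" using ca y unfolding cent_def by blast
    moreover have "ga_mult G b y = ga_mult G y b" using cb y unfolding cent_def by blast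
    ultimately show "ga_mult G e y = ga_mult G y e"
      unfolding e_def ga_mult_sub_left ga_mult_sub_right by simp
  qed
  moreover have "ga_mult G e b = (\<lambda>_. 0)"
    unfolding e_def ga_mult_sub_left ab ib by (rule ga_sub_self)
  moreover have "ga_mult G b e = (\<lambda>_. 0)"
    unfolding e_def ga_mult_sub_right ba ib by (rule ga_sub_self)
  moreover have "a = ga_add b e"
    unfolding e_def by (simp add: ga_add_def ga_sub_def)
  ultimately show ?thesis unfolding a_def b_def by blast
qed

end

theorem lemma6:
  fixes G :: "('a, 'b) monoid_scheme" and H K A :: "'a set"
  assumes "group G" and "finite (carrier G)"
    and "subgroup H G"
    and "K \<lhd> G\<lparr>carrier := H\<rparr>"
    and "cyclic_group (G\<lparr>carrier := H\<rparr> Mod K)"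
    and "A \<lhd> G\<lparr>carrier := H\<rparr>"
  shows "\<exists>e. in_ga H e
           \<and> ga_mult G e e = e
           \<and> (\<forall>y. in_ga H y \<longrightarrow> ga_mult G e y = ga_mult G y e)
           \<and> ga_mult G e (eps G H K) = (\<lambda>_. 0)
           \<and> ga_mult G (eps G H K) e = (\<lambda>_. 0)
           \<and> eps G A (K \<inter> A) = ga_add (eps G H K) e"
proof -
  interpret lsetup G H K A
    using assms by (simp add: lsetup_def lsetup_axioms_def fgroup_def fgroup_axioms_def)
  show ?thesis by (rule final)
qed


end
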